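(* Let $n\ge1$ and $q>0$. Consider the partially asymmetric exclusion process (PASEP) on $n$ sites numbered $1,\dots,n$ from right to left: a continuous-time Markov chain on subsets of occupied sites where, for $2\le s\le n$, a particle at site $s$ moves to an empty site $s-1$ (hop right) at rate $1$, a particle at site $s-1$ moves to an empty site $s$ (hop left) at rate $q$, a particle enters at site $n$ when it is empty at rate $1$, and a particle at site $1$ exits at rate $1$. For a composition $I$ of $n+1$ let \[ N_I(q)=\sum_{J\succeq I}\left(-\tfrac1q\right)^{\ell(I)-\ell(J)}q^{-\mathrm{st}'(I,J)}\mathrm{QFact}_A(J), \] and let $Z_n=\sum_{I'}N_{I'}(q)$ over all compositions $I'$ of $n+1$ (the partition function). Let $\tau$ be the state in which exactly the sites in $\mathrm{Des}(I)$ are occupied and all sites of $\{1,\dots,n\}\setminus\mathrm{Des}(I)$ are empty. Then the steady-state probability of $\tau$ equals $N_I(q)/Z_n$.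
   Context: A composition of $m$ is a sequence $I=(i_1,\dots,i_r)$ of positive integers with sum $m$; $\ell(I)=r$; $\mathrm{Des}(I)=\{i_1,i_1+i_2,\dots,i_1+\dots+i_{r-1}\}$; $J\succeq I$ ($J$ coarser than $I$) means $\mathrm{Des}(J)\subseteq\mathrm{Des}(I)$. For $I\preceq J$, $\mathrm{st}'(I,J)=\#\{(a,b)\in\mathrm{Des}(I)\times\mathrm{Des}(J):a\le b\}$. $[m]_q=1+q+\dots+q^{m-1}$ and $\mathrm{QFact}_A(j_1,\dots,j_p)=[p]_q^{j_1}[p-1]_q^{j_2}\cdots[1]_q^{j_p}$. *)

theory Defs
  imports Complex_Main
begin

definition compositions :: "nat \<Rightarrow> nat list set" where
  "compositions m = {I. (\<forall>x\<in>set I. 0 < x) \<and> sum_list I = m}"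

definition Des :: "nat list \<Rightarrow> nat set" where
  "Des I = {sum_list (take k I) | k. 1 \<le> k \<and> k < length I}"

definition st' :: "nat list \<Rightarrow> nat list \<Rightarrow> nat" where
  "st' I J = card {(a, b). a \<in> Des I \<and> b \<in> Des J \<and> a \<le> b}"

definition qint :: "nat \<Rightarrow> real \<Rightarrow> real" where
  "qint m q = (\<Sum>i<m. q ^ i)"

definition QFactA :: "real \<Rightarrow> nat list \<Rightarrow> real" where
  "QFactA q J = (\<Prod>k<length J. qint (length J - k) q ^ (J ! k))"

text \<open>N_I(q) for a composition I of m, summing over coarser compositions J of m.\<close>
definition N_I :: "real \<Rightarrow> nat \<Rightarrow> nat list \<Rightarrow> real" where
  "N_I q m I = (\<Sum>J\<in>{J \<in> compositions m. Des J \<subseteq> Des I}.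
      (- 1 / q) ^ (length I - length J) * inverse (q ^ st' I J) * QFactA q J)"

definition Z_n :: "real \<Rightarrow> nat \<Rightarrow> real" where
  "Z_n q n = (\<Sum>I'\<in>compositions (n + 1). N_I q (n + 1) I')"

text \<open>PASEP on sites 1..n (numbered right to left); states = sets of occupied sites.
  Transition rate from state S to state T.\<close>
definition pasep_rate :: "nat \<Rightarrow> real \<Rightarrow> nat set \<Rightarrow> nat set \<Rightarrow> real" where
  "pasep_rate n q S T =
     (\<Sum>s\<in>{2..n}. if s \<in> S \<and> s - 1 \<notin> S \<and> T = insert (s - 1) (S - {s}) then 1 else 0)
   + (\<Sum>s\<in>{2..n}. if s - 1 \<in> S \<and> s \<notin> S \<and> T = insert s (S - {s - 1}) then q else 0)
   + (if n \<notin> S \<and> T = insert n S then 1 else 0)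
   + (if 1 \<in> S \<and> T = S - {1} then 1 else 0)"

definition pasep_states :: "nat \<Rightarrow> nat set set" where
  "pasep_states n = Pow {1..n}"

definition pasep_stationary :: "nat \<Rightarrow> real \<Rightarrow> (nat set \<Rightarrow> real) \<Rightarrow> bool" where
  "pasep_stationary n q \<pi> \<longleftrightarrow>
     (\<forall>S\<in>pasep_states n. 0 \<le> \<pi> S) \<and>
     (\<Sum>S\<in>pasep_states n. \<pi> S) = 1 \<and>
     (\<forall>T\<in>pasep_states n.
        (\<Sum>S\<in>pasep_states n - {T}. \<pi> S * pasep_rate n q S T)
        = \<pi> T * (\<Sum>S\<in>pasep_states n - {T}. pasep_rate n q T S))"

end

theory Submission
  imports Defs
begin


fun NN :: "real \<Rightarrow> nat \<Rightarrow> bool list \<Rightarrow> real" where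
  "NN q c [] = 1"
| "NN q c (False # xs) = qint (Suc c) q * NN q c xs"
| "NN q c (True # xs) = - (qint (Suc c) q * NN q c xs) / q^(Suc c)
      + qint (Suc (Suc c)) q * NN q (Suc c) xs / q^(Suc c)"

lemma qint_Suc: "qint (Suc m) q = qint m q + q^m"
  by (simp add: qint_def)

lemma qint_Suc': "qint (Suc m) q = 1 + q * qint m q"
proof (induction m)
  case 0 then show ?case by (simp add: qint_def)
next
  case (Suc m)
  have "qint (Suc (Suc m)) q = qint (Suc m) q + q^(Suc m)" by (rule qint_Suc)
  also have "\<dots> = 1 + q * (qint m q + q^m)" using Suc by (simp add: algebra_simps)
  also have "\<dots> = 1 + q * qint (Suc m) q" by (simp add: qint_Suc distrib_left)
  finally show ?case .
qed

lemma qint_1[simp]: "qint (Suc 0) q = 1" by (simp add: qint_def)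

lemma NN_R2: "NN q 0 (False # xs) = NN q 0 xs" by simp

lemma NN_R3: assumes "q \<noteq> 0" shows "NN q c (xs @ [True]) = NN q c xs"
proof (induction xs arbitrary: c)
  case Nil
  have "qint (Suc (Suc c)) q = qint (Suc c) q + q^(Suc c)" by (rule qint_Suc)
  then show ?case using assms by (simp add: field_simps)
next
  case (Cons x xs)
  then show ?case by (cases x) simp_all
qed

lemma NN_R1: assumes "q \<noteq> 0" shows
  "NN q c (u @ True # False # v) = q * NN q c (u @ False # True # v) + NN q c (u @ True # v) + NN q c (u @ False # v)"
proof (induction u arbitrary: c)
  case Nil
  define a where "a = qint (Suc c) q"
  define b where "b = qint (Suc (Suc c)) q"
  define Q where "Q = q^(Suc c)"
  have b1: "b = 1 + q * a" unfolding a_def b_def by (rule qint_Suc')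
  have b2: "b = a + Q" unfolding a_def b_def Q_def by (rule qint_Suc)
  have Q0: "Q \<noteq> 0" using assms by (simp add: Q_def)
  define A where "A = NN q c v"
  define B where "B = NN q (Suc c) v"
  have "NN q c (True # False # v) = - (a * (a * A)) / Q + b * (b * B) / Q"
    by (simp add: a_def b_def Q_def A_def B_def)
  moreover have "q * NN q c (False # True # v) + NN q c (True # v) + NN q c (False # v)
     = q * (a * (- (a * A) / Q + b * B / Q)) + (- (a * A) / Q + b * B / Q) + a * A"
    by (simp add: a_def b_def Q_def A_def B_def)
  moreover have "- (a * (a * A)) / Q + b * (b * B) / Q = q * (a * (- (a * A) / Q + b * B / Q)) + (- (a * A) / Q + b * B / Q) + a * A"
  proof -
    have QQ: "Q = 1 + q*a - a" using b1 b2 by simp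
    have Q0': "1 + q*a - a \<noteq> 0" using Q0 QQ by simp
    have key: "-(a*a*A) + b*b*B = q*a*(-(a*A) + b*B) + (-(a*A)+b*B) + a*A*Q"
      unfolding QQ b1 by (simp add: algebra_simps)
    have "(-(a*a*A) + b*b*B) / Q = (q*a*(-(a*A) + b*B) + (-(a*A)+b*B) + a*A*Q) / Q"
      using key by simp
    then show ?thesis using Q0 by (simp add: add_divide_distrib diff_divide_distrib algebra_simps)
  qed
  ultimately show ?case by simp
next
  case (Cons x xs)
  then show ?case by (cases x) (simp_all add: algebra_simps diff_divide_distrib add_divide_distrib)
qed

definition wd :: "nat \<Rightarrow> nat set \<Rightarrow> bool list" where
  "wd n S = map (\<lambda>k. (n - k) \<in> S) [0..<n]"

lemma length_wd[simp]: "length (wd n S) = n" by (simp add: wd_def)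

lemma nth_wd: "k < n \<Longrightarrow> wd n S ! k = ((n - k) \<in> S)" by (simp add: wd_def)

lemma wd_insert: assumes "1 \<le> s" "s \<le> n" shows "wd n (insert s S) = (wd n S)[n - s := True]"
  by (rule nth_equalityI) (use assms in \<open>auto simp: nth_wd nth_list_update\<close>)

lemma wd_remove: assumes "1 \<le> s" "s \<le> n" shows "wd n (S - {s}) = (wd n S)[n - s := False]"
  by (rule nth_equalityI) (use assms in \<open>auto simp: nth_wd nth_list_update\<close>)

definition cc :: "bool \<Rightarrow> real" where "cc b = (if b then -1 else 1)"

lemma bond_list: assumes "q \<noteq> 0" shows
  "(if \<not> a \<and> b then NN q 0 (u @ True # False # v) else 0)
   + (if a \<and> \<not> b then q * NN q 0 (u @ False # True # v) else 0)
   - NN q 0 (u @ a # b # v) * ((if a \<and> \<not> b then 1 else 0) + (if \<not> a \<and> b then q else 0))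
   = cc a * NN q 0 (u @ b # v) - cc b * NN q 0 (u @ a # v)"
  using NN_R1[OF assms, of 0 u v] by (cases a; cases b) (simp_all add: cc_def)

lemma split2: "Suc i < length L \<Longrightarrow> L = take i L @ L!i # L!(Suc i) # drop (Suc (Suc i)) L"
  by (metis Cons_nth_drop_Suc Suc_lessD append_take_drop_id)

definition W :: "real \<Rightarrow> nat \<Rightarrow> nat set \<Rightarrow> real" where "W q n S = NN q 0 (wd n S)"

definition yy :: "real \<Rightarrow> nat \<Rightarrow> nat set \<Rightarrow> nat \<Rightarrow> real" where
  "yy q n T k = cc (k \<in> T) * NN q 0 (take (n - k) (wd n T) @ drop (Suc (n - k)) (wd n T))"

lemma bond_set: assumes "q \<noteq> 0" "2 \<le> s" "s \<le> n" shows
  "(if s - 1 \<in> T \<and> s \<notin> T then W q n (insert s (T - {s - 1})) else 0)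
   + (if s \<in> T \<and> s - 1 \<notin> T then q * W q n (insert (s - 1) (T - {s})) else 0)
   - W q n T * ((if s \<in> T \<and> s - 1 \<notin> T then 1 else 0) + (if s - 1 \<in> T \<and> s \<notin> T then q else 0))
   = yy q n T s - yy q n T (s - 1)"
proof -
  define L where "L = wd n T"
  define i where "i = n - s"
  have si: "n - (s - 1) = Suc i" using assms unfolding i_def by simp
  have len: "Suc i < length L" using assms unfolding L_def i_def by simp
  define u where "u = take i L"
  define v where "v = drop (Suc (Suc i)) L"
  define a where "a = L ! i"
  define b where "b = L ! Suc i"
  have LL: "L = u @ a # b # v" unfolding u_def v_def a_def b_def using split2[OF len] .
  have lu: "length u = i" using len unfolding u_def by simp
  have a': "a = (s \<in> T)" unfolding a_def L_def i_def using assms by (simp add: nth_wd)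
  have e: "n - Suc i = s - 1" using si assms by linarith
  have b': "b = (s - 1 \<in> T)" unfolding b_def L_def using len e unfolding L_def by (simp add: nth_wd)
  have w1: "wd n (insert s (T - {s - 1})) = u @ True # False # v"
  proof -
    have "wd n (insert s (T - {s - 1})) = L[Suc i := False, i := True]"
      using assms si unfolding L_def i_def by (simp add: wd_insert wd_remove)
    also have "\<dots> = u @ True # False # v" unfolding LL using lu by (simp add: list_update_append)
    finally show ?thesis .
  qed
  have w2: "wd n (insert (s - 1) (T - {s})) = u @ False # True # v"
  proof -
    have "wd n (insert (s - 1) (T - {s})) = L[i := False, Suc i := True]"
      using assms si unfolding L_def i_def by (simp add: wd_insert wd_remove)
    also have "\<dots> = u @ False # True # v" unfolding LL using lu by (simp add: list_update_append)
    finally show ?thesis .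
  qed
  have y1: "yy q n T s = cc a * NN q 0 (u @ b # v)"
    unfolding yy_def a' [symmetric] L_def[symmetric] i_def[symmetric] unfolding LL using lu by simp
  have y2: "yy q n T (s - 1) = cc b * NN q 0 (u @ a # v)"
    unfolding yy_def b' [symmetric] L_def[symmetric] si unfolding LL using lu by simp
  have wT: "W q n T = NN q 0 (u @ a # b # v)" unfolding W_def L_def[symmetric] LL ..
  have bl: "(if \<not> a \<and> b then NN q 0 (u @ True # False # v) else 0)
   + (if a \<and> \<not> b then q * NN q 0 (u @ False # True # v) else 0)
   - NN q 0 (u @ a # b # v) * ((if a \<and> \<not> b then 1 else 0) + (if \<not> a \<and> b then q else 0))
   = cc a * NN q 0 (u @ b # v) - cc b * NN q 0 (u @ a # v)" by (rule bond_list[OF assms(1)])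
  show ?thesis
    unfolding wT unfolding W_def w1 w2 y1 y2 using bl unfolding a' b' by (cases "s \<in> T"; cases "s - 1 \<in> T") simp_all
qed

lemma entry_set: assumes "1 \<le> n" shows
  "(if n \<in> T then W q n (T - {n}) else 0) - W q n T * (if n \<notin> T then 1 else 0) = - yy q n T n"
proof -
  define L where "L = wd n T"
  obtain a v where LL: "L = a # v" using assms unfolding L_def
    by (metis length_wd list.exhaust list.size(3) not_one_le_zero)
  have a': "a = (n \<in> T)" using nth_wd[of 0 n T] assms unfolding L_def[symmetric] LL by simp
  have w1: "wd n (T - {n}) = False # v" using assms wd_remove[of n n T] unfolding L_def[symmetric] LL by simp
  have y: "yy q n T n = cc a * NN q 0 v" unfolding yy_def L_def[symmetric] LL a' by simp
  show ?thesis unfolding y W_def w1 L_def[symmetric] LL a' by (cases "n \<in> T") (simp_all add: cc_def)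
qed

lemma exit_set: assumes "1 \<le> n" "q \<noteq> 0" shows
  "(if 1 \<notin> T then W q n (insert 1 T) else 0) - W q n T * (if 1 \<in> T then 1 else 0) = yy q n T 1"
proof -
  define L where "L = wd n T"
  have len: "length L = n" unfolding L_def by simp
  define v where "v = take (n - 1) L"
  define a where "a = L ! (n - 1)"
  have dd: "drop (n - 1) L = [a]" unfolding a_def using Cons_nth_drop_Suc[of "n - 1" L] len assms by simp
  have LL: "L = v @ [a]" unfolding v_def using dd append_take_drop_id[of "n - 1" L] by simp
  have lv: "length v = n - 1" using len assms unfolding v_def by simp
  have a': "a = (1 \<in> T)" unfolding a_def L_def using assms by (simp add: nth_wd)
  have w1: "wd n (insert 1 T) = v @ [True]" using assms wd_insert[of 1 n T] lv
    unfolding L_def[symmetric] LL by (simp add: list_update_append)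
  have y: "yy q n T 1 = cc a * NN q 0 v" unfolding yy_def L_def[symmetric] LL a'[symmetric] using lv by simp
  show ?thesis unfolding y W_def w1 L_def[symmetric] LL a'
    by (cases "1 \<in> T") (simp_all add: cc_def NN_R3[OF assms(2)])
qed

lemma telescope2: "1 \<le> (n::nat) \<Longrightarrow> (\<Sum>s\<in>{2..n}. f s - f (s - 1)) = f n - (f 1 :: real)"
proof (induction n)
  case 0 then show ?case by simp
next
  case (Suc n)
  show ?case
  proof (cases "n = 0")
    case True then show ?thesis by simp
  next
    case False
    then have "{2..Suc n} = insert (Suc n) {2..n}" by auto
    then show ?thesis using Suc False by simp
  qed
qed

lemma hop_equiv: "a \<noteq> b \<Longrightarrow> (b \<in> S \<and> a \<notin> S \<and> T = insert a (S - {b})) \<longleftrightarrow> (S = insert b (T - {a}) \<and> a \<in> T \<and> b \<notin> T)"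
  by auto
lemma entry_equiv: "(n \<notin> S \<and> T = insert n S) \<longleftrightarrow> (S = T - {n} \<and> n \<in> T)" by auto
lemma exit_equiv: "(m \<in> S \<and> T = S - {m}) \<longleftrightarrow> (S = insert m T \<and> m \<notin> T)" by auto

lemma sum_delta_cond:
  assumes "finite X" "\<And>S. S \<in> X \<Longrightarrow> P S = (S = e \<and> C)" "C \<Longrightarrow> e \<in> X"
  shows "(\<Sum>S\<in>X. g S * (if P S then r else 0)) = (if C then g e * r else (0::real))"
proof -
  have "(\<Sum>S\<in>X. g S * (if P S then r else 0)) = (\<Sum>S\<in>X. if S = e then (if C then g e * r else 0) else 0)"
    by (rule sum.cong) (auto simp: assms(2))
  also have "\<dots> = (if C then g e * r else 0)" using assms(1,3) by (simp add: sum.delta)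
  finally show ?thesis .
qed

lemma finite_states: "finite (pasep_states n)" by (simp add: pasep_states_def)

lemma in_eq:
  assumes n: "1 \<le> n" and T: "T \<in> pasep_states n"
  shows "(\<Sum>S\<in>pasep_states n - {T}. g S * pasep_rate n q S T) =
    (\<Sum>s\<in>{2..n}. (if s - 1 \<in> T \<and> s \<notin> T then g (insert s (T - {s - 1})) else 0)
       + (if s \<in> T \<and> s - 1 \<notin> T then q * g (insert (s - 1) (T - {s})) else 0))
    + (if n \<in> T then g (T - {n}) else 0) + (if 1 \<notin> T then g (insert 1 T) else 0)"
proof -
  define X where "X = pasep_states n - {T}"
  have fX: "finite X" unfolding X_def by (simp add: finite_states)
  have Tsub: "T \<subseteq> {1..n}" using T by (simp add: pasep_states_def)
  have XS: "S \<in> X \<longleftrightarrow> S \<subseteq> {1..n} \<and> S \<noteq> T" for S unfolding X_def pasep_states_def by auto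
  have A: "(\<Sum>S\<in>X. g S * (if s \<in> S \<and> s - 1 \<notin> S \<and> T = insert (s - 1) (S - {s}) then 1 else 0))
        = (if s - 1 \<in> T \<and> s \<notin> T then g (insert s (T - {s - 1})) * 1 else 0)" if s: "s \<in> {2..n}" for s
    apply (rule sum_delta_cond[OF fX])
     apply (rule hop_equiv) using s apply simp
    using s Tsub unfolding XS by auto
  have B: "(\<Sum>S\<in>X. g S * (if s - 1 \<in> S \<and> s \<notin> S \<and> T = insert s (S - {s - 1}) then q else 0))
        = (if s \<in> T \<and> s - 1 \<notin> T then g (insert (s - 1) (T - {s})) * q else 0)" if s: "s \<in> {2..n}" for s
    apply (rule sum_delta_cond[OF fX])
     apply (rule hop_equiv) using s apply simp
    using s Tsub unfolding XS by auto
  have C: "(\<Sum>S\<in>X. g S * (if n \<notin> S \<and> T = insert n S then 1 else 0))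
        = (if n \<in> T then g (T - {n}) * 1 else 0)"
    apply (rule sum_delta_cond[OF fX])
     apply (rule entry_equiv exit_equiv)
    using n Tsub unfolding XS by auto
  have D: "(\<Sum>S\<in>X. g S * (if 1 \<in> S \<and> T = S - {1} then 1 else 0))
        = (if 1 \<notin> T then g (insert 1 T) * 1 else 0)"
    apply (rule sum_delta_cond[OF fX])
     apply (rule entry_equiv exit_equiv)
    using n Tsub unfolding XS by auto
  have "(\<Sum>S\<in>X. g S * pasep_rate n q S T) =
     (\<Sum>S\<in>X. (\<Sum>s\<in>{2..n}. g S * (if s \<in> S \<and> s - 1 \<notin> S \<and> T = insert (s - 1) (S - {s}) then 1 else 0))
        + (\<Sum>s\<in>{2..n}. g S * (if s - 1 \<in> S \<and> s \<notin> S \<and> T = insert s (S - {s - 1}) then q else 0))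
        + g S * (if n \<notin> S \<and> T = insert n S then 1 else 0)
        + g S * (if 1 \<in> S \<and> T = S - {1} then 1 else 0))"
    unfolding pasep_rate_def by (simp add: algebra_simps sum_distrib_left)
  also have "\<dots> = (\<Sum>s\<in>{2..n}. (\<Sum>S\<in>X. g S * (if s \<in> S \<and> s - 1 \<notin> S \<and> T = insert (s - 1) (S - {s}) then 1 else 0)))
        + (\<Sum>s\<in>{2..n}. (\<Sum>S\<in>X. g S * (if s - 1 \<in> S \<and> s \<notin> S \<and> T = insert s (S - {s - 1}) then q else 0)))
        + (\<Sum>S\<in>X. g S * (if n \<notin> S \<and> T = insert n S then 1 else 0))
        + (\<Sum>S\<in>X. g S * (if 1 \<in> S \<and> T = S - {1} then 1 else 0))"
    by (simp add: sum.distrib sum.swap[of _ X])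
  also have "\<dots> = (\<Sum>s\<in>{2..n}. (if s - 1 \<in> T \<and> s \<notin> T then g (insert s (T - {s - 1})) * 1 else 0))
        + (\<Sum>s\<in>{2..n}. (if s \<in> T \<and> s - 1 \<notin> T then g (insert (s - 1) (T - {s})) * q else 0))
        + (if n \<in> T then g (T - {n}) * 1 else 0) + (if 1 \<notin> T then g (insert 1 T) * 1 else 0)"
    using A B C D by simp
  also have "\<dots> = (\<Sum>s\<in>{2..n}. (if s - 1 \<in> T \<and> s \<notin> T then g (insert s (T - {s - 1})) else 0)
       + (if s \<in> T \<and> s - 1 \<notin> T then q * g (insert (s - 1) (T - {s})) else 0))
    + (if n \<in> T then g (T - {n}) else 0) + (if 1 \<notin> T then g (insert 1 T) else 0)"
    by (simp add: sum.distrib mult.commute cong: if_cong)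
  finally show ?thesis unfolding X_def .
qed

lemma out_eq:
  assumes n: "1 \<le> n" and T: "T \<in> pasep_states n"
  shows "(\<Sum>S\<in>pasep_states n - {T}. pasep_rate n q T S) =
    (\<Sum>s\<in>{2..n}. (if s \<in> T \<and> s - 1 \<notin> T then 1 else 0) + (if s - 1 \<in> T \<and> s \<notin> T then q else 0))
    + (if n \<notin> T then 1 else 0) + (if 1 \<in> T then 1 else 0)"
proof -
  define X where "X = pasep_states n - {T}"
  have fX: "finite X" unfolding X_def by (simp add: finite_states)
  have Tsub: "T \<subseteq> {1..n}" using T by (simp add: pasep_states_def)
  have XS: "S \<in> X \<longleftrightarrow> S \<subseteq> {1..n} \<and> S \<noteq> T" for S unfolding X_def pasep_states_def by auto
  let ?g = "\<lambda>S::nat set. (1::real)"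
  have A: "(\<Sum>S\<in>X. ?g S * (if s \<in> T \<and> s - 1 \<notin> T \<and> S = insert (s - 1) (T - {s}) then 1 else 0))
        = (if s \<in> T \<and> s - 1 \<notin> T then ?g (insert (s - 1) (T - {s})) * 1 else 0)" if s: "s \<in> {2..n}" for s
    apply (rule sum_delta_cond[OF fX])
     apply blast
    using s Tsub unfolding XS by auto
  have B: "(\<Sum>S\<in>X. ?g S * (if s - 1 \<in> T \<and> s \<notin> T \<and> S = insert s (T - {s - 1}) then q else 0))
        = (if s - 1 \<in> T \<and> s \<notin> T then ?g (insert s (T - {s - 1})) * q else 0)" if s: "s \<in> {2..n}" for s
    apply (rule sum_delta_cond[OF fX])
     apply blast
    using s Tsub unfolding XS by auto
  have C: "(\<Sum>S\<in>X. ?g S * (if n \<notin> T \<and> S = insert n T then 1 else 0))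
        = (if n \<notin> T then ?g (insert n T) * 1 else 0)"
    apply (rule sum_delta_cond[OF fX])
     apply blast
    using n Tsub unfolding XS by auto
  have D: "(\<Sum>S\<in>X. ?g S * (if 1 \<in> T \<and> S = T - {1} then 1 else 0))
        = (if 1 \<in> T then ?g (T - {1}) * 1 else 0)"
    apply (rule sum_delta_cond[OF fX])
     apply blast
    using n Tsub unfolding XS by auto
  have "(\<Sum>S\<in>X. pasep_rate n q T S) =
     (\<Sum>S\<in>X. (\<Sum>s\<in>{2..n}. ?g S * (if s \<in> T \<and> s - 1 \<notin> T \<and> S = insert (s - 1) (T - {s}) then 1 else 0))
        + (\<Sum>s\<in>{2..n}. ?g S * (if s - 1 \<in> T \<and> s \<notin> T \<and> S = insert s (T - {s - 1}) then q else 0))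
        + ?g S * (if n \<notin> T \<and> S = insert n T then 1 else 0)
        + ?g S * (if 1 \<in> T \<and> S = T - {1} then 1 else 0))"
    unfolding pasep_rate_def by simp
  also have "\<dots> = (\<Sum>s\<in>{2..n}. (\<Sum>S\<in>X. ?g S * (if s \<in> T \<and> s - 1 \<notin> T \<and> S = insert (s - 1) (T - {s}) then 1 else 0)))
        + (\<Sum>s\<in>{2..n}. (\<Sum>S\<in>X. ?g S * (if s - 1 \<in> T \<and> s \<notin> T \<and> S = insert s (T - {s - 1}) then q else 0)))
        + (\<Sum>S\<in>X. ?g S * (if n \<notin> T \<and> S = insert n T then 1 else 0))
        + (\<Sum>S\<in>X. ?g S * (if 1 \<in> T \<and> S = T - {1} then 1 else 0))"
    by (simp only: sum.distrib sum.swap[of _ X])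
  also have "\<dots> = (\<Sum>s\<in>{2..n}. (if s \<in> T \<and> s - 1 \<notin> T then ?g (insert (s - 1) (T - {s})) * 1 else 0))
        + (\<Sum>s\<in>{2..n}. (if s - 1 \<in> T \<and> s \<notin> T then ?g (insert s (T - {s - 1})) * q else 0))
        + (if n \<notin> T then ?g (insert n T) * 1 else 0) + (if 1 \<in> T then ?g (T - {1}) * 1 else 0)"
    using A B C D by simp
  also have "\<dots> = (\<Sum>s\<in>{2..n}. (if s \<in> T \<and> s - 1 \<notin> T then 1 else 0) + (if s - 1 \<in> T \<and> s \<notin> T then q else 0))
    + (if n \<notin> T then 1 else 0) + (if 1 \<in> T then 1 else 0)"
    by (simp add: sum.distrib cong: if_cong)
  finally show ?thesis unfolding X_def .
qed

lemma W_balance: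
  assumes n: "1 \<le> n" and q: "q \<noteq> 0" and T: "T \<in> pasep_states n"
  shows "(\<Sum>S\<in>pasep_states n - {T}. W q n S * pasep_rate n q S T)
       = W q n T * (\<Sum>S\<in>pasep_states n - {T}. pasep_rate n q T S)"
proof -
  let ?B = "\<lambda>s. (if s - 1 \<in> T \<and> s \<notin> T then W q n (insert s (T - {s - 1})) else 0)
   + (if s \<in> T \<and> s - 1 \<notin> T then q * W q n (insert (s - 1) (T - {s})) else 0)
   - W q n T * ((if s \<in> T \<and> s - 1 \<notin> T then 1 else 0) + (if s - 1 \<in> T \<and> s \<notin> T then q else 0))"
  let ?E = "(if n \<in> T then W q n (T - {n}) else 0) - W q n T * (if n \<notin> T then 1 else 0)"
  let ?X = "(if 1 \<notin> T then W q n (insert 1 T) else 0) - W q n T * (if 1 \<in> T then 1 else 0)"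
  have "(\<Sum>S\<in>pasep_states n - {T}. W q n S * pasep_rate n q S T)
       - W q n T * (\<Sum>S\<in>pasep_states n - {T}. pasep_rate n q T S)
       = (\<Sum>s\<in>{2..n}. ?B s) + ?E + ?X"
    unfolding in_eq[OF n T] out_eq[OF n T]
    by (simp add: sum_distrib_left sum_subtractf sum.distrib algebra_simps)
  also have "(\<Sum>s\<in>{2..n}. ?B s) = (\<Sum>s\<in>{2..n}. yy q n T s - yy q n T (s - 1))"
    apply (rule sum.cong[OF refl])
    subgoal for s by (rule bond_set[OF q]) auto
    done
  also have "\<dots> = yy q n T n - yy q n T 1" by (rule telescope2[OF n])
  also have "?E = - yy q n T n" by (rule entry_set[OF n])
  also have "?X = yy q n T 1" by (rule exit_set[OF n q])
  finally show ?thesis by simp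
qed



lemma rate_nonneg: "0 < q \<Longrightarrow> 0 \<le> pasep_rate n q S T"
  unfolding pasep_rate_def by (intro add_nonneg_nonneg sum_nonneg) auto

lemma rate_pos_right:
  assumes q: "0 < q" and s: "2 \<le> s" "s \<le> n" and "s \<in> S" "s - 1 \<notin> S"
  shows "0 < pasep_rate n q S (insert (s - 1) (S - {s}))"
proof -
  let ?T = "insert (s - 1) (S - {s})"
  let ?f = "\<lambda>s'. if s' \<in> S \<and> s' - 1 \<notin> S \<and> ?T = insert (s' - 1) (S - {s'}) then 1 else (0::real)"
  have "1 \<le> (\<Sum>s'\<in>{2..n}. ?f s')"
  proof -
    have "?f s \<le> (\<Sum>s'\<in>{2..n}. ?f s')" by (rule member_le_sum) (use s in auto)
    then show ?thesis using assms by simp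
  qed
  moreover have "0 \<le> (\<Sum>s'\<in>{2..n}. if s' - 1 \<in> S \<and> s' \<notin> S \<and> ?T = insert s' (S - {s' - 1}) then q else 0)"
    using q by (intro sum_nonneg) auto
  ultimately show ?thesis unfolding pasep_rate_def by (simp add: add_pos_nonneg)
qed

lemma rate_pos_entry:
  assumes q: "0 < q" and "n \<notin> S"
  shows "0 < pasep_rate n q S (insert n S)"
proof -
  have "0 \<le> (\<Sum>s'\<in>{2..n}. if s' \<in> S \<and> s' - 1 \<notin> S \<and> insert n S = insert (s' - 1) (S - {s'}) then 1 else (0::real))"
    by (intro sum_nonneg) auto
  moreover have "0 \<le> (\<Sum>s'\<in>{2..n}. if s' - 1 \<in> S \<and> s' \<notin> S \<and> insert n S = insert s' (S - {s' - 1}) then q else 0)"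
    using q by (intro sum_nonneg) auto
  moreover have "0 \<le> (if 1 \<in> S \<and> insert n S = S - {1} then 1 else (0::real))" by simp
  moreover have E: "(if n \<notin> S \<and> insert n S = insert n S then 1 else (0::real)) = 1" using assms by simp
  ultimately show ?thesis unfolding pasep_rate_def E by linarith
qed

lemma rate_pos_exit:
  assumes q: "0 < q" and "1 \<in> S"
  shows "0 < pasep_rate n q S (S - {1})"
proof -
  have "0 \<le> (\<Sum>s'\<in>{2..n}. if s' \<in> S \<and> s' - 1 \<notin> S \<and> S - {1} = insert (s' - 1) (S - {s'}) then 1 else (0::real))"
    by (intro sum_nonneg) auto
  moreover have "0 \<le> (\<Sum>s'\<in>{2..n}. if s' - 1 \<in> S \<and> s' \<notin> S \<and> S - {1} = insert s' (S - {s' - 1}) then q else 0)"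
    using q by (intro sum_nonneg) auto
  moreover have "0 \<le> (if n \<notin> S \<and> S - {1} = insert n S then 1 else (0::real))" by simp
  moreover have E: "(if 1 \<in> S \<and> S - {1} = S - {1} then 1 else (0::real)) = 1" using assms by simp
  ultimately show ?thesis unfolding pasep_rate_def E by linarith
qed

lemma closure_all:
  assumes n: "1 \<le> n" and q: "0 < q" and Zs: "Z \<subseteq> pasep_states n" and Zne: "Z \<noteq> {}"
    and cl: "\<And>T S. T \<in> Z \<Longrightarrow> S \<in> pasep_states n \<Longrightarrow> S \<noteq> T \<Longrightarrow> 0 < pasep_rate n q S T \<Longrightarrow> S \<in> Z"
  shows "Z = pasep_states n"
proof -
  have st: "S \<in> pasep_states n \<longleftrightarrow> S \<subseteq> {1..n}" for S by (simp add: pasep_states_def)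
  define \<mu> where "\<mu> T = (\<Sum>x\<in>T. n + 1 - x)" for T :: "nat set"
  have empty: "{} \<in> Z" if "T \<in> Z" for T
    using that
  proof (induction T rule: measure_induct_rule[where f = \<mu>])
    case (less T)
    have TS: "T \<subseteq> {1..n}" using less.prems Zs st by auto
    have fT: "finite T" using TS finite_subset by blast
    show ?case
    proof (cases "T = {}")
      case True then show ?thesis using less.prems by simp
    next
      case False
      define M where "M = Max T"
      have MT: "M \<in> T" unfolding M_def using False fT by simp
      have Mle: "x \<le> M" if "x \<in> T" for x unfolding M_def using fT that by simp
      have M1: "1 \<le> M" "M \<le> n" using MT TS by auto
      show ?thesis
      proof (cases "M = n")
        case True
        define P where "P = T - {n}"
        have "P \<in> Z"
        proof (rule cl[OF less.prems])
          show "P \<in> pasep_states n" using TS unfolding P_def st by auto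
          show "P \<noteq> T" using MT True unfolding P_def by auto
          have "insert n P = T" using MT True unfolding P_def by auto
          then show "0 < pasep_rate n q P T" using rate_pos_entry[OF q, of n P] unfolding P_def by simp
        qed
        moreover have "\<mu> P < \<mu> T"
        proof -
          have "\<mu> T = (n + 1 - n) + \<mu> P" unfolding \<mu>_def P_def using fT MT True by (simp add: sum.remove)
          then show ?thesis by simp
        qed
        ultimately show ?thesis using less.IH by blast
      next
        case False
        then have Mn: "M < n" using M1 by simp
        define P where "P = insert (M + 1) (T - {M})"
        have M1T: "M + 1 \<notin> T" using Mle by fastforce
        have "P \<in> Z"
        proof (rule cl[OF less.prems])
          show "P \<in> pasep_states n" using TS Mn unfolding P_def st by auto
          show "P \<noteq> T" using M1T unfolding P_def by auto
          have "insert (M + 1 - 1) (P - {M + 1}) = T" using MT M1T unfolding P_def by auto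
          moreover have "0 < pasep_rate n q P (insert (M + 1 - 1) (P - {M + 1}))"
            by (rule rate_pos_right[OF q]) (use M1 Mn in \<open>auto simp: P_def\<close>)
          ultimately show "0 < pasep_rate n q P T" by simp
        qed
        moreover have "\<mu> P < \<mu> T"
        proof -
          have f1: "finite (T - {M})" using fT by simp
          have "\<mu> T = (n + 1 - M) + \<mu> (T - {M})" unfolding \<mu>_def using fT MT by (simp add: sum.remove)
          moreover have "\<mu> P = (n + 1 - (M + 1)) + \<mu> (T - {M})" unfolding \<mu>_def P_def using f1 M1T by simp
          ultimately show ?thesis using Mn by simp
        qed
        ultimately show ?thesis using less.IH by blast
      qed
    qed
  qed
  obtain T0 where "T0 \<in> Z" using Zne by blast
  then have e: "{} \<in> Z" by (rule empty)
  have all: "S \<in> Z" if "S \<in> pasep_states n" for S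
    using that
  proof (induction S rule: measure_induct_rule[where f = "\<lambda>S. \<Sum>S"])
    case (less S)
    have SS: "S \<subseteq> {1..n}" using less.prems st by auto
    have fS: "finite S" using SS finite_subset by blast
    show ?case
    proof (cases "S = {}")
      case True then show ?thesis using e by simp
    next
      case False
      show ?thesis
      proof (cases "1 \<in> S")
        case True
        define S' where "S' = S - {1}"
        have "S' \<in> Z"
        proof (rule less.IH)
          show "S' \<in> pasep_states n" using SS unfolding S'_def st by auto
          have "\<Sum>S = 1 + \<Sum>S'" unfolding S'_def using fS True by (simp add: sum.remove)
          then show "\<Sum>S' < \<Sum>S" by simp
        qed
        then show ?thesis
          by (rule cl) (use less.prems True rate_pos_exit[OF q True] in \<open>auto simp: S'_def\<close>)
      next
        case False
        define m where "m = Min S"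
        have mS: "m \<in> S" unfolding m_def using \<open>S \<noteq> {}\<close> fS by simp
        have mle: "m \<le> x" if "x \<in> S" for x unfolding m_def using fS that by simp
        have m2: "2 \<le> m" "m \<le> n" using mS SS False by (auto, metis One_nat_def Suc_1 Suc_leI atLeastAtMost_iff le_neq_implies_less subsetD)
        have m1S: "m - 1 \<notin> S" using mle m2 by fastforce
        define S' where "S' = insert (m - 1) (S - {m})"
        have "S' \<in> Z"
        proof (rule less.IH)
          show "S' \<in> pasep_states n" using SS m2 unfolding S'_def st by auto
          have f1: "finite (S - {m})" using fS by simp
          have "\<Sum>S = m + \<Sum>(S - {m})" using fS mS by (simp add: sum.remove)
          moreover have "\<Sum>S' = (m - 1) + \<Sum>(S - {m})" unfolding S'_def using f1 m1S by simp
          ultimately show "\<Sum>S' < \<Sum>S" using m2 by simp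
        qed
        then show ?thesis
          by (rule cl) (use less.prems m1S rate_pos_right[OF q m2 mS m1S] in \<open>auto simp: S'_def\<close>)
      qed
    qed
  qed
  show ?thesis using Zs all by blast
qed

lemma sum_nonpos_eq_0D:
  assumes "finite A" "\<And>x. x \<in> A \<Longrightarrow> f x \<le> (0::real)" "(\<Sum>x\<in>A. f x) = 0" "a \<in> A"
  shows "f a = 0"
proof -
  have "(\<Sum>x\<in>A. - f x) = 0" using assms(3) by (simp add: sum_negf)
  then have "\<forall>x\<in>A. - f x = 0" using assms(1,2) by (subst (asm) sum_nonneg_eq_0_iff) auto
  then show ?thesis using assms(4) by simp
qed

lemma stationary_pos:
  assumes n: "1 \<le> n" and q: "0 < q" and st: "pasep_stationary n q \<pi>" and S: "S \<in> pasep_states n"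
  shows "0 < \<pi> S"
proof (rule ccontr)
  assume "\<not> 0 < \<pi> S"
  then have S0: "\<pi> S = 0" using st S unfolding pasep_stationary_def by force
  define Z where "Z = {S \<in> pasep_states n. \<pi> S = 0}"
  have fin: "finite (pasep_states n)" by (simp add: pasep_states_def)
  have "Z = pasep_states n"
  proof (rule closure_all[OF n q])
    show "Z \<subseteq> pasep_states n" unfolding Z_def by auto
    show "Z \<noteq> {}" using S S0 unfolding Z_def by auto
    fix T S' assume T: "T \<in> Z" and S': "S' \<in> pasep_states n" "S' \<noteq> T" "0 < pasep_rate n q S' T"
    have bal: "(\<Sum>S\<in>pasep_states n - {T}. \<pi> S * pasep_rate n q S T) = 0"
      using st T unfolding pasep_stationary_def Z_def by auto
    have "\<pi> S' * pasep_rate n q S' T = 0"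
    proof -
      have "\<forall>x\<in>pasep_states n - {T}. \<pi> x * pasep_rate n q x T = 0"
        using bal fin st rate_nonneg[OF q] unfolding pasep_stationary_def
        by (subst (asm) sum_nonneg_eq_0_iff) auto
      then show ?thesis using S' by auto
    qed
    then show "S' \<in> Z" using S' unfolding Z_def by simp
  qed
  then have "(\<Sum>S\<in>pasep_states n. \<pi> S) = 0" unfolding Z_def
    by (metis (mono_tags, lifting) mem_Collect_eq sum.neutral)
  then show False using st unfolding pasep_stationary_def by simp
qed

lemma stationary_unique:
  assumes n: "1 \<le> n" and q: "0 < q" and st: "pasep_stationary n q \<pi>"
    and bal: "\<And>T. T \<in> pasep_states n \<Longrightarrow> (\<Sum>S\<in>pasep_states n - {T}. w S * pasep_rate n q S T)
       = w T * (\<Sum>S\<in>pasep_states n - {T}. pasep_rate n q T S)"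
  shows "\<exists>c. \<forall>S\<in>pasep_states n. w S = c * \<pi> S"
proof -
  have fin: "finite (pasep_states n)" by (simp add: pasep_states_def)
  have ne: "pasep_states n \<noteq> {}" by (auto simp: pasep_states_def)
  have pos: "\<And>S. S \<in> pasep_states n \<Longrightarrow> 0 < \<pi> S" by (rule stationary_pos[OF n q st])
  define r where "r S = w S / \<pi> S" for S
  have wr: "w S = r S * \<pi> S" if "S \<in> pasep_states n" for S using pos[OF that] unfolding r_def by simp
  define M where "M = Max (r ` pasep_states n)"
  have rM: "r S \<le> M" if "S \<in> pasep_states n" for S unfolding M_def using fin that by simp
  have "M \<in> r ` pasep_states n" unfolding M_def using fin ne by simp
  then obtain S0 where S0: "S0 \<in> pasep_states n" "r S0 = M" by auto
  define Z where "Z = {S \<in> pasep_states n. r S = M}"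
  have "Z = pasep_states n"
  proof (rule closure_all[OF n q])
    show "Z \<subseteq> pasep_states n" unfolding Z_def by auto
    show "Z \<noteq> {}" using S0 unfolding Z_def by auto
    fix T S' assume T: "T \<in> Z" and S': "S' \<in> pasep_states n" "S' \<noteq> T" "0 < pasep_rate n q S' T"
    have Ts: "T \<in> pasep_states n" and rT: "r T = M" using T unfolding Z_def by auto
    let ?X = "pasep_states n - {T}"
    have pbal: "(\<Sum>S\<in>?X. \<pi> S * pasep_rate n q S T) = \<pi> T * (\<Sum>S\<in>?X. pasep_rate n q T S)"
      using st Ts unfolding pasep_stationary_def by auto
    have "(\<Sum>S\<in>?X. \<pi> S * pasep_rate n q S T * (r S - M))
        = (\<Sum>S\<in>?X. w S * pasep_rate n q S T) - M * (\<Sum>S\<in>?X. \<pi> S * pasep_rate n q S T)"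
      by (simp add: sum_subtractf sum_distrib_left algebra_simps wr)
    also have "\<dots> = 0" unfolding bal[OF Ts] pbal wr[OF Ts] rT by simp
    finally have z: "(\<Sum>S\<in>?X. \<pi> S * pasep_rate n q S T * (r S - M)) = 0" .
    have "\<pi> S' * pasep_rate n q S' T * (r S' - M) = 0"
    proof (rule sum_nonpos_eq_0D[OF _ _ z])
      show "finite ?X" using fin by simp
      show "S' \<in> ?X" using S' by simp
      fix x assume x: "x \<in> ?X"
      have "0 \<le> \<pi> x * pasep_rate n q x T" using pos[of x] rate_nonneg[OF q, of n x T] x by simp
      moreover have "r x - M \<le> 0" using rM[of x] x by simp
      ultimately show "\<pi> x * pasep_rate n q x T * (r x - M) \<le> 0" by (simp add: mult_nonneg_nonpos)
    qed
    then show "S' \<in> Z" using S' pos[of S'] unfolding Z_def by simp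
  qed
  then have "\<forall>S\<in>pasep_states n. w S = M * \<pi> S" using wr unfolding Z_def by auto
  then show ?thesis by blast
qed



definition stS :: "nat set \<Rightarrow> nat set \<Rightarrow> nat" where
  "stS S T = card {(a, b). a \<in> S \<and> b \<in> T \<and> a \<le> b}"

definition Fset :: "real \<Rightarrow> nat \<Rightarrow> nat \<Rightarrow> nat set \<Rightarrow> real" where
  "Fset q c m T = (\<Prod>i\<in>{1..m}. qint (Suc (c + card {t\<in>T. i \<le> t})) q)"

definition Nset :: "real \<Rightarrow> nat \<Rightarrow> nat \<Rightarrow> nat set \<Rightarrow> real" where
  "Nset q c n S = (\<Sum>T\<in>Pow S. (- 1 / q) ^ (card S - card T) * inverse (q ^ (stS S T + c * card S)) * Fset q c n T)"

lemma wd_Suc: "wd (Suc n) S = (Suc n \<in> S) # wd n S"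
  unfolding wd_def by (simp add: upt_conv_Cons map_Suc_upt[symmetric] del: upt_Suc)

lemma finite_bounded: "\<forall>t\<in>T. t \<le> (n::nat) \<Longrightarrow> finite T"
  by (meson finite_atMost finite_subset atMost_iff subsetI)

lemma Fset_Suc_out: assumes "\<forall>t\<in>T. t \<le> n" shows "Fset q c (Suc n) T = Fset q c n T * qint (Suc c) q"
proof -
  have e: "{t\<in>T. Suc n \<le> t} = {}" using assms by auto
  show ?thesis unfolding Fset_def prod.cl_ivl_Suc e by simp
qed

lemma Fset_Suc_in: assumes "\<forall>t\<in>T. t \<le> n" shows "Fset q c (Suc n) (insert (Suc n) T) = Fset q (Suc c) n T * qint (Suc (Suc c)) q"
proof -
  have e: "card {t\<in>insert (Suc n) T. i \<le> t} = Suc (card {t\<in>T. i \<le> t})" if "i \<le> Suc n" for i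
  proof -
    have "{t\<in>insert (Suc n) T. i \<le> t} = insert (Suc n) {t\<in>T. i \<le> t}" using that by auto
    moreover have "finite {t\<in>T. i \<le> t}" using finite_bounded[OF assms] by simp
    moreover have "Suc n \<notin> {t\<in>T. i \<le> t}" using assms by auto
    ultimately show ?thesis by simp
  qed
  have "Fset q c (Suc n) (insert (Suc n) T) = (\<Prod>i\<in>{1..Suc n}. qint (Suc (Suc c + card {t\<in>T. i \<le> t})) q)"
    unfolding Fset_def
    apply (rule prod.cong[OF refl])
    subgoal for i by (subst e) auto
    done
  also have "\<dots> = Fset q (Suc c) n T * qint (Suc (Suc c)) q"
  proof -
    have e: "{t\<in>T. Suc n \<le> t} = {}" using assms by auto
    show ?thesis unfolding Fset_def prod.cl_ivl_Suc e by simp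
  qed
  finally show ?thesis .
qed


lemma stS_out: assumes "\<forall>t\<in>S. t \<le> n" "T \<subseteq> S" shows "stS (insert (Suc n) S) T = stS S T"
proof -
  have "{(a, b). a \<in> insert (Suc n) S \<and> b \<in> T \<and> a \<le> b} = {(a, b). a \<in> S \<and> b \<in> T \<and> a \<le> b}"
    using assms by fastforce
  then show ?thesis unfolding stS_def by simp
qed

lemma stS_in: assumes "\<forall>t\<in>S. t \<le> n" "T \<subseteq> S" shows "stS (insert (Suc n) S) (insert (Suc n) T) = stS S T + Suc (card S)"
proof -
  have fS: "finite S" using assms(1) by (rule finite_bounded)
  have nS: "Suc n \<notin> S" using assms by auto
  have eq: "{(a, b). a \<in> insert (Suc n) S \<and> b \<in> insert (Suc n) T \<and> a \<le> b}
      = {(a, b). a \<in> S \<and> b \<in> T \<and> a \<le> b} \<union> (insert (Suc n) S \<times> {Suc n})"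
    using assms by fastforce
  have f1: "finite {(a, b). a \<in> S \<and> b \<in> T \<and> a \<le> b}"
    by (rule finite_subset[of _ "S \<times> T"]) (use fS assms(2) finite_subset in auto)
  have d: "{(a, b). a \<in> S \<and> b \<in> T \<and> a \<le> b} \<inter> (insert (Suc n) S \<times> {Suc n}) = {}"
    using assms by fastforce
  have "card (insert (Suc n) S \<times> {Suc n}) = Suc (card S)" using fS nS by (simp add: card_cartesian_product)
  then show ?thesis unfolding stS_def eq using card_Un_disjoint[OF f1 _ d] fS by simp
qed

lemma Nset_NN:
  assumes q: "q \<noteq> 0" shows "\<forall>t\<in>S. 1 \<le> t \<and> t \<le> n \<Longrightarrow> Nset q c n S = NN q c (wd n S)"
proof (induction n arbitrary: c S)
  case 0
  then have "S = {}" by auto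
  then show ?case by (simp add: Nset_def Fset_def stS_def wd_def)
next
  case (Suc n)
  show ?case
  proof (cases "Suc n \<in> S")
    case False
    then have Sb: "\<forall>t\<in>S. 1 \<le> t \<and> t \<le> n" using Suc.prems by (force simp: le_Suc_eq)
    have wdS: "wd (Suc n) S = False # wd n S" using False by (simp add: wd_Suc)
    have "Nset q c (Suc n) S = qint (Suc c) q * Nset q c n S"
      unfolding Nset_def sum_distrib_left
    proof (rule sum.cong[OF refl])
      fix T assume "T \<in> Pow S"
      then have "\<forall>t\<in>T. t \<le> n" using Sb by auto
      then show "(- 1 / q) ^ (card S - card T) * inverse (q ^ (stS S T + c * card S)) * Fset q c (Suc n) T =
         qint (Suc c) q * ((- 1 / q) ^ (card S - card T) * inverse (q ^ (stS S T + c * card S)) * Fset q c n T)"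
        by (simp add: Fset_Suc_out)
    qed
    then show ?thesis using Suc.IH[OF Sb] wdS by simp
  next
    case True
    define S0 where "S0 = S - {Suc n}"
    have Sb: "\<forall>t\<in>S0. 1 \<le> t \<and> t \<le> n" using Suc.prems unfolding S0_def by (force simp: le_Suc_eq)
    have Sb': "\<forall>t\<in>S0. t \<le> n" using Sb by auto
    have fS0: "finite S0" using Sb' by (rule finite_bounded)
    have SS: "S = insert (Suc n) S0" using True unfolding S0_def by auto
    have nS0: "Suc n \<notin> S0" unfolding S0_def by simp
    have wd0: "wd n S = wd n S0" unfolding wd_def S0_def by auto
    have wdS: "wd (Suc n) S = True # wd n S0" using True wd0 by (simp add: wd_Suc)
    have cS: "card S = Suc (card S0)" unfolding SS using fS0 nS0 by simp
    let ?g = "\<lambda>T. (- 1 / q) ^ (card S - card T) * inverse (q ^ (stS S T + c * card S)) * Fset q c (Suc n) T"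
    have "Nset q c (Suc n) S = (\<Sum>T\<in>Pow S0. ?g T) + (\<Sum>T\<in>insert (Suc n) ` Pow S0. ?g T)"
      unfolding Nset_def SS[symmetric] unfolding SS Pow_insert
      by (rule sum.union_disjoint) (use fS0 nS0 in auto)
    also have "(\<Sum>T\<in>Pow S0. ?g T) = (- qint (Suc c) q / q^(Suc c)) * Nset q c n S0"
      unfolding Nset_def sum_distrib_left
    proof (rule sum.cong[OF refl])
      fix T assume T: "T \<in> Pow S0"
      have Tb: "\<forall>t\<in>T. t \<le> n" using T Sb' by auto
      have cT: "card T \<le> card S0" using T fS0 by (simp add: card_mono)
      have fT: "Fset q c (Suc n) T = Fset q c n T * qint (Suc c) q" by (rule Fset_Suc_out[OF Tb])
      have sT: "stS S T = stS S0 T" unfolding SS using Sb' T by (simp add: stS_out)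
      have e1: "card S - card T = Suc (card S0 - card T)" using cS cT by simp
      have e2: "stS S T + c * card S = (stS S0 T + c * card S0) + c" using sT cS by simp
      show "?g T = (- qint (Suc c) q / q^(Suc c)) * ((- 1 / q) ^ (card S0 - card T) * inverse (q ^ (stS S0 T + c * card S0)) * Fset q c n T)"
        unfolding fT e1 e2 using q by (simp add: power_add field_simps)
    qed
    also have "(\<Sum>T\<in>insert (Suc n) ` Pow S0. ?g T) = (\<Sum>T\<in>Pow S0. ?g (insert (Suc n) T))"
    proof -
      have "inj_on (insert (Suc n)) (Pow S0)"
      proof (rule inj_onI)
        fix A B assume "A \<in> Pow S0" "B \<in> Pow S0" "insert (Suc n) A = insert (Suc n) B"
        then show "A = B" using nS0 by (metis PowD insert_ident subsetD)
      qed
      then show ?thesis using sum.reindex[of "insert (Suc n)" "Pow S0" ?g] by (simp add: o_def)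
    qed
    also have "\<dots> = (qint (Suc (Suc c)) q / q ^ Suc c) * Nset q (Suc c) n S0"
      unfolding Nset_def sum_distrib_left
    proof (rule sum.cong[OF refl])
      fix T assume T: "T \<in> Pow S0"
      have Tb: "\<forall>t\<in>T. t \<le> n" using T Sb' by auto
      have cT: "card T \<le> card S0" using T fS0 by (simp add: card_mono)
      have fT: "finite T" using Tb by (rule finite_bounded)
      have "Suc n \<notin> T" using Tb by auto
      then have cT': "card (insert (Suc n) T) = Suc (card T)" using fT by simp
      have fF: "Fset q c (Suc n) (insert (Suc n) T) = Fset q (Suc c) n T * qint (Suc (Suc c)) q" by (rule Fset_Suc_in[OF Tb])
      have sT: "stS S (insert (Suc n) T) = stS S0 T + Suc (card S0)" unfolding SS using Sb' T by (simp add: stS_in)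
      have e1: "card S - card (insert (Suc n) T) = card S0 - card T" using cS cT' by simp
      have e2: "stS S (insert (Suc n) T) + c * card S = (stS S0 T + Suc c * card S0) + Suc c" using sT cS by simp
      show "?g (insert (Suc n) T) = (qint (Suc (Suc c)) q / q ^ Suc c) * ((- 1 / q) ^ (card S0 - card T) * inverse (q ^ (stS S0 T + Suc c * card S0)) * Fset q (Suc c) n T)"
        unfolding fF e1 e2 using q by (simp add: power_add field_simps)
    qed
    finally show ?thesis using Suc.IH[OF Sb] wdS by (simp add: algebra_simps)
  qed
qed



lemma Des_Nil[simp]: "Des [] = {}" by (simp add: Des_def)
lemma Des_single[simp]: "Des [j] = {}" by (simp add: Des_def)

lemma Des_Cons: assumes "J \<noteq> []" shows "Des (j # J) = insert j ((+) j ` Des J)"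
proof (rule set_eqI)
  fix x
  show "x \<in> Des (j # J) \<longleftrightarrow> x \<in> insert j ((+) j ` Des J)"
  proof
    assume "x \<in> Des (j # J)"
    then obtain k where k: "x = sum_list (take k (j#J))" "1 \<le> k" "k < length (j#J)"
      unfolding Des_def by blast
    then obtain k' where kk: "k = Suc k'" by (cases k) auto
    show "x \<in> insert j ((+) j ` Des J)"
    proof (cases "k' = 0")
      case True then show ?thesis using k kk by simp
    next
      case False
      then have "sum_list (take k' J) \<in> Des J" unfolding Des_def using k kk by auto
      then show ?thesis using k kk by simp
    qed
  next
    assume "x \<in> insert j ((+) j ` Des J)"
    then show "x \<in> Des (j # J)"
    proof
      assume "x = j"
      then have "x = sum_list (take 1 (j # J))" by simp
      moreover have "1 < length (j # J)" using assms by simp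
      ultimately show ?thesis unfolding Des_def by blast
    next
      assume "x \<in> (+) j ` Des J"
      then obtain k where k: "x = j + sum_list (take k J)" "1 \<le> k" "k < length J"
        unfolding Des_def by blast
      then have "x = sum_list (take (Suc k) (j # J))" by simp
      moreover have "1 \<le> Suc k" "Suc k < length (j # J)" using k by auto
      ultimately show ?thesis unfolding Des_def by blast
    qed
  qed
qed

lemma comp_Cons: "(j # J \<in> compositions m) \<longleftrightarrow> (0 < j \<and> j \<le> m \<and> J \<in> compositions (m - j))"
  by (auto simp: compositions_def)

lemma comp_Nil: "([] \<in> compositions m) \<longleftrightarrow> m = 0"
  by (auto simp: compositions_def)

lemma comp_pos: "J \<in> compositions m \<Longrightarrow> J \<noteq> [] \<Longrightarrow> 0 < m"
  by (cases J) (auto simp: compositions_def)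

lemma Des_bound: "J \<in> compositions m \<Longrightarrow> Des J \<subseteq> {1..m - 1}"
proof (induction J arbitrary: m)
  case Nil then show ?case by simp
next
  case (Cons j J)
  then have j: "0 < j" "j \<le> m" and J: "J \<in> compositions (m - j)" by (auto simp: comp_Cons)
  show ?case
  proof (cases "J = []")
    case True then show ?thesis by simp
  next
    case False
    have "0 < m - j" using comp_pos[OF J False] .
    have "\<forall>x\<in>Des J. 1 \<le> x \<and> x \<le> m - j - 1" using Cons.IH[OF J] by auto
    then show ?thesis using j \<open>0 < m - j\<close> unfolding Des_Cons[OF False] by auto
  qed
qed

lemma finite_Des: "J \<in> compositions m \<Longrightarrow> finite (Des J)"
  using Des_bound finite_subset by blast

lemma card_Des: "J \<in> compositions m \<Longrightarrow> card (Des J) = length J - 1"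
proof (induction J arbitrary: m)
  case Nil then show ?case by simp
next
  case (Cons j J)
  then have j: "0 < j" "j \<le> m" and J: "J \<in> compositions (m - j)" by (auto simp: comp_Cons)
  show ?case
  proof (cases "J = []")
    case True then show ?thesis by simp
  next
    case False
    have nin: "j \<notin> (+) j ` Des J" using Des_bound[OF J] by auto
    have "card ((+) j ` Des J) = card (Des J)" by (rule card_image) simp
    then show ?thesis unfolding Des_Cons[OF False] using nin finite_Des[OF J] Cons.IH[OF J] False
      by simp
  qed
qed

lemma Des_inj: "J1 \<in> compositions m \<Longrightarrow> J2 \<in> compositions m \<Longrightarrow> Des J1 = Des J2 \<Longrightarrow> J1 = J2"
proof (induction J1 arbitrary: m J2)
  case Nil
  then have "m = 0" by (simp add: comp_Nil)
  then show ?case using Nil comp_pos by blast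
next
  case (Cons j J1)
  then have j: "0 < j" "j \<le> m" and J1: "J1 \<in> compositions (m - j)" by (auto simp: comp_Cons)
  obtain j2 J2' where J2e: "J2 = j2 # J2'" using Cons.prems(2) j comp_Nil by (cases J2) auto
  have j2: "0 < j2" "j2 \<le> m" and J2: "J2' \<in> compositions (m - j2)" using Cons.prems(2) J2e by (auto simp: comp_Cons)
  show ?case
  proof (cases "J1 = []")
    case True
    have "J2' = []"
    proof (rule ccontr)
      assume "J2' \<noteq> []"
      then have "j2 \<in> Des J2" unfolding J2e using Des_Cons[of J2' j2] by simp
      then show False using Cons.prems(3) True by simp
    qed
    then show ?thesis using True J2e Cons.prems by (simp add: compositions_def)
  next
    case False
    have ne2: "J2' \<noteq> []"
    proof
      assume "J2' = []"
      then have "Des J2 = {}" using J2e by simp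
      then show False using Cons.prems(3) False Des_Cons by simp
    qed
    have D1: "Des (j # J1) = insert j ((+) j ` Des J1)" by (rule Des_Cons[OF False])
    have D2: "Des J2 = insert j2 ((+) j2 ` Des J2')" unfolding J2e by (rule Des_Cons[OF ne2])
    have b1: "\<forall>x\<in>Des J1. 1 \<le> x" using Des_bound[OF J1] by auto
    have b2: "\<forall>x\<in>Des J2'. 1 \<le> x" using Des_bound[OF J2] by auto
    have "j \<in> Des (j # J1)" unfolding D1 by simp
    then have "j \<in> Des J2" using Cons.prems(3) by simp
    then have "j2 \<le> j" using D2 b2 by auto
    moreover have "j2 \<in> Des J2" unfolding D2 by simp
    then have "j2 \<in> Des (j # J1)" using Cons.prems(3) by simp
    then have "j \<le> j2" using D1 b1 by auto
    ultimately have jj: "j = j2" by simp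
    have "insert j ((+) j ` Des J1) = insert j ((+) j ` Des J2')" using Cons.prems(3) D1 D2 jj by simp
    moreover have "j \<notin> (+) j ` Des J1" "j \<notin> (+) j ` Des J2'" using b1 b2 by auto
    ultimately have "(+) j ` Des J1 = (+) j ` Des J2'" by (metis insert_ident)
    then have "Des J1 = Des J2'" by (simp add: inj_image_eq_iff)
    then have "J1 = J2'" using Cons.IH[OF J1] J2 jj by simp
    then show ?thesis using J2e jj by simp
  qed
qed

lemma Des_surj: "1 \<le> m \<Longrightarrow> T \<subseteq> {1..m - 1} \<Longrightarrow> \<exists>J\<in>compositions m. Des J = T"
proof (induction m arbitrary: T rule: less_induct)
  case (less m)
  show ?case
  proof (cases "T = {}")
    case True
    have "[m] \<in> compositions m" using less.prems by (simp add: compositions_def)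
    then show ?thesis using True Des_single by metis
  next
    case False
    have fT: "finite T" using less.prems(2) by (rule finite_subset) simp
    define j where "j = Min T"
    have jT: "j \<in> T" unfolding j_def using fT False by simp
    have jle: "j \<le> x" if "x \<in> T" for x unfolding j_def using fT that by simp
    have j1: "1 \<le> j" "j \<le> m - 1" using jT less.prems by auto
    define T' where "T' = (\<lambda>x. x - j) ` (T - {j})"
    have T'b: "T' \<subseteq> {1..(m - j) - 1}"
    proof
      fix y assume "y \<in> T'"
      then obtain x where x: "x \<in> T" "x \<noteq> j" "y = x - j" unfolding T'_def by auto
      have "j < x" using jle[OF x(1)] x(2) by simp
      moreover have "x \<le> m - 1" using x(1) less.prems by auto
      ultimately show "y \<in> {1..(m - j) - 1}" using x(3) by auto
    qed
    have lt: "m - j < m" "1 \<le> m - j" using j1 less.prems(1) by arith+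
    obtain J' where J': "J' \<in> compositions (m - j)" "Des J' = T'"
      using less.IH[OF lt T'b] by blast
    have ne: "J' \<noteq> []"
    proof
      assume "J' = []"
      then show False using J'(1) lt(2) by (simp add: comp_Nil)
    qed
    have "j # J' \<in> compositions m" using J'(1) j1 by (simp add: comp_Cons)
    moreover have "Des (j # J') = T"
    proof -
      have "(+) j ` T' = T - {j}"
      proof -
        have "(+) j ` T' = (\<lambda>x. j + (x - j)) ` (T - {j})" unfolding T'_def by (simp add: image_image)
        also have "\<dots> = (\<lambda>x. x) ` (T - {j})"
          by (rule image_cong[OF refl]) (metis DiffD1 jle le_add_diff_inverse)
        finally show ?thesis by simp
      qed
      then show ?thesis unfolding Des_Cons[OF ne] J'(2) using jT by (simp add: insert_absorb)
    qed
    ultimately show ?thesis by blast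
  qed
qed

lemma QFactA_Cons: "QFactA q (j # J) = qint (Suc (length J)) q ^ j * QFactA q J"
  unfolding QFactA_def length_Cons prod.lessThan_Suc_shift by simp

lemma Fset_shift:
  assumes fD: "finite D" and D1: "\<forall>x\<in>D. 1 \<le> x"
  shows "Fset q c (j + m') (insert j ((+) j ` D)) = qint (Suc (c + Suc (card D))) q ^ j * Fset q c m' D"
proof -
  let ?T = "insert j ((+) j ` D)"
  let ?f = "\<lambda>i. qint (Suc (c + card {t\<in>?T. i \<le> t})) q"
  have nin: "j \<notin> (+) j ` D" using D1 by auto
  have cT: "card ?T = Suc (card D)" using nin fD by (simp add: card_image)
  have un: "{1..j + m'} = {1..j} \<union> {1 + j..m' + j}" by auto
  have "Fset q c (j + m') ?T = prod ?f {1..j} * prod ?f {1 + j..m' + j}"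
    unfolding Fset_def un by (rule prod.union_disjoint) auto
  also have "prod ?f {1..j} = qint (Suc (c + Suc (card D))) q ^ j"
  proof -
    have "prod ?f {1..j} = (\<Prod>i\<in>{1..j}. qint (Suc (c + Suc (card D))) q)"
    proof (rule prod.cong[OF refl])
      fix i assume "i \<in> {1..j}"
      then have "{t\<in>?T. i \<le> t} = ?T" by auto
      then show "?f i = qint (Suc (c + Suc (card D))) q" using cT by simp
    qed
    then show ?thesis by simp
  qed
  also have "prod ?f {1 + j..m' + j} = Fset q c m' D"
    unfolding prod.shift_bounds_cl_nat_ivl Fset_def
  proof (rule prod.cong[OF refl])
    fix i assume i: "i \<in> {1..m'}"
    have "{t\<in>?T. i + j \<le> t} = (+) j ` {t\<in>D. i \<le> t}" using i by auto
    moreover have "card ((+) j ` {t\<in>D. i \<le> t}) = card {t\<in>D. i \<le> t}" by (rule card_image) simp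
    ultimately show "?f (i + j) = qint (Suc (c + card {t\<in>D. i \<le> t})) q" by simp
  qed
  finally show ?thesis by simp
qed

lemma QFactA_Fset: "J \<in> compositions m \<Longrightarrow> QFactA q J = Fset q 0 m (Des J)"
proof (induction J arbitrary: m)
  case Nil
  then have "m = 0" by (simp add: comp_Nil)
  then show ?case by (simp add: QFactA_def Fset_def)
next
  case (Cons j J)
  then have j: "0 < j" "j \<le> m" and J: "J \<in> compositions (m - j)" by (auto simp: comp_Cons)
  show ?case
  proof (cases "J = []")
    case True
    then have "m = j" using J j by (simp add: comp_Nil)
    then show ?thesis using True by (simp add: QFactA_def Fset_def)
  next
    case False
    have mm: "m = j + (m - j)" using j by simp
    have D1: "\<forall>x\<in>Des J. 1 \<le> x" using Des_bound[OF J] by auto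
    have cD: "Suc (card (Des J)) = length J" using card_Des[OF J] False by (cases J) auto
    have "Fset q 0 m (Des (j # J)) = qint (Suc (0 + Suc (card (Des J)))) q ^ j * Fset q 0 (m - j) (Des J)"
      unfolding Des_Cons[OF False] by (subst mm, rule Fset_shift[OF finite_Des[OF J] D1])
    then show ?thesis using Cons.IH[OF J] cD by (simp add: QFactA_Cons)
  qed
qed

lemma finite_compositions: "finite (compositions m)"
proof -
  have "compositions m \<subseteq> {xs. set xs \<subseteq> {0..m} \<and> length xs \<le> m}"
  proof
    fix J assume J: "J \<in> compositions m"
    then have pos: "\<forall>x\<in>set J. 0 < x" and s: "sum_list J = m" by (auto simp: compositions_def)
    have "length J \<le> sum_list J" using pos by (induction J) auto
    moreover have "set J \<subseteq> {0..m}" using s member_le_sum_list by fastforce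
    ultimately show "J \<in> {xs. set xs \<subseteq> {0..m} \<and> length xs \<le> m}" using s by simp
  qed
  moreover have "finite {xs. set xs \<subseteq> {0..m} \<and> length xs \<le> m}"
    by (rule finite_lists_length_le) simp
  ultimately show ?thesis by (rule finite_subset)
qed


lemma NN_replicate: "NN q 0 (replicate k False) = 1"
  by (induction k) simp_all

lemma wd_empty: "wd n {} = replicate n False"
  unfolding wd_def by (simp add: map_replicate_const)

lemma N_I_eq:
  assumes q: "q \<noteq> 0" and I: "I \<in> compositions (n + 1)"
  shows "N_I q (n + 1) I = W q n (Des I)"
proof -
  define A where "A = {J \<in> compositions (n + 1). Des J \<subseteq> Des I}"
  define g where "g T = (- 1 / q) ^ (card (Des I) - card T) * inverse (q ^ (stS (Des I) T)) * Fset q 0 n T" for T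
  have DI: "Des I \<subseteq> {1..n}" using Des_bound[OF I] by simp
  have lenI: "length I = Suc (card (Des I))" using card_Des[OF I] I comp_Nil
    by (cases I) auto
  have fJ: "(- 1 / q) ^ (length I - length J) * inverse (q ^ st' I J) * QFactA q J = g (Des J)"
    if J: "J \<in> A" for J
  proof -
    have Jc: "J \<in> compositions (n + 1)" using J unfolding A_def by simp
    have lenJ: "length J = Suc (card (Des J))" using card_Des[OF Jc] Jc comp_Nil by (cases J) auto
    have DJ: "\<forall>t\<in>Des J. t \<le> n" using Des_bound[OF Jc] by auto
    have "QFactA q J = Fset q 0 n (Des J)"
      using QFactA_Fset[OF Jc] Fset_Suc_out[OF DJ, of q 0] by simp
    then show ?thesis unfolding g_def st'_def stS_def[symmetric] lenI lenJ by simp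
  qed
  have "N_I q (n + 1) I = (\<Sum>J\<in>A. g (Des J))"
    unfolding N_I_def A_def[symmetric] by (rule sum.cong[OF refl]) (rule fJ)
  also have "\<dots> = (\<Sum>T\<in>Des ` A. g T)"
  proof -
    have "inj_on Des A" by (rule inj_onI) (auto simp: A_def intro: Des_inj)
    then show ?thesis by (simp add: sum.reindex)
  qed
  also have "Des ` A = Pow (Des I)"
  proof
    show "Des ` A \<subseteq> Pow (Des I)" unfolding A_def by auto
    show "Pow (Des I) \<subseteq> Des ` A"
    proof
      fix T assume "T \<in> Pow (Des I)"
      then have T: "T \<subseteq> Des I" by simp
      then have "T \<subseteq> {1..n + 1 - 1}" using DI by auto
      then obtain J where "J \<in> compositions (n + 1)" "Des J = T" using Des_surj[of "n + 1" T] by auto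
      then show "T \<in> Des ` A" unfolding A_def using T by auto
    qed
  qed
  also have "(\<Sum>T\<in>Pow (Des I). g T) = Nset q 0 n (Des I)" unfolding Nset_def g_def by simp
  also have "\<dots> = W q n (Des I)" unfolding W_def by (rule Nset_NN[OF q]) (use DI in auto)
  finally show ?thesis .
qed

lemma Des_image: "Des ` compositions (n + 1) = pasep_states n"
proof
  show "Des ` compositions (n + 1) \<subseteq> pasep_states n"
    unfolding pasep_states_def using Des_bound by fastforce
  show "pasep_states n \<subseteq> Des ` compositions (n + 1)"
  proof
    fix T assume "T \<in> pasep_states n"
    then have "T \<subseteq> {1..n + 1 - 1}" by (simp add: pasep_states_def)
    then obtain J where "J \<in> compositions (n + 1)" "Des J = T" using Des_surj[of "n + 1" T] by auto
    then show "T \<in> Des ` compositions (n + 1)" by auto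
  qed
qed

lemma Z_eq:
  assumes q: "q \<noteq> 0"
  shows "Z_n q n = (\<Sum>S\<in>pasep_states n. W q n S)"
proof -
  have "Z_n q n = (\<Sum>I'\<in>compositions (n + 1). W q n (Des I'))"
    unfolding Z_n_def by (rule sum.cong[OF refl]) (rule N_I_eq[OF q])
  also have "\<dots> = (\<Sum>S\<in>Des ` compositions (n + 1). W q n S)"
  proof -
    have "inj_on Des (compositions (n + 1))" by (rule inj_onI) (rule Des_inj)
    then show ?thesis by (simp add: sum.reindex)
  qed
  finally show ?thesis unfolding Des_image .
qed

theorem mainTheorem3:
  fixes n :: nat and q :: real and I :: "nat list" and \<pi> :: "nat set \<Rightarrow> real"
  assumes "1 \<le> n" and "0 < q"
    and "I \<in> compositions (n + 1)"
    and "pasep_stationary n q \<pi>"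
  shows "\<pi> (Des I) = N_I q (n + 1) I / Z_n q n"
proof -
  have q0: "q \<noteq> 0" using assms(2) by simp
  obtain c where c: "\<forall>S\<in>pasep_states n. W q n S = c * \<pi> S"
    using stationary_unique[OF assms(1) assms(2) assms(4), of "W q n"] W_balance[OF assms(1) q0] by blast
  have sum1: "(\<Sum>S\<in>pasep_states n. \<pi> S) = 1" using assms(4) unfolding pasep_stationary_def by simp
  have Z: "Z_n q n = c"
  proof -
    have "Z_n q n = (\<Sum>S\<in>pasep_states n. c * \<pi> S)" unfolding Z_eq[OF q0] using c by simp
    also have "\<dots> = c" using sum1 by (simp add: sum_distrib_left[symmetric])
    finally show ?thesis .
  qed
  have e: "{} \<in> pasep_states n" by (simp add: pasep_states_def)
  have "W q n {} = 1" unfolding W_def wd_empty by (rule NN_replicate)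
  then have c0: "c \<noteq> 0" using c e by auto
  have DI: "Des I \<in> pasep_states n" using Des_bound[OF assms(3)] by (simp add: pasep_states_def)
  show ?thesis unfolding N_I_eq[OF q0 assms(3)] Z using c DI c0 by simp
qed

end
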